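(* Let $t\mapsto\zeta(t)=(\xi(t),\eta(t),s(t))$, $t\in I$, be a solution of the relaxed system (R) such that for all $t\in I$: $\epsilon(t)\neq0$, $n^j(t)\neq0$ and $\partial_Tf_{\mathrm{hl}}(T^j(t),\mathbf x^j(t))\neq0$ for $j=1,\dots,S$, and $f_{\mathrm{holdup}}'(L^j(t))\neq0$ for $j=1,\dots,S-1$. Then the Jacobian $D_{(\eta,s)}g(\zeta(t))$ is non-singular for every $t\in I$ if and only if $s^1(t),\dots,s^S(t)\neq0$ for every $t\in I$.
   Context: Fix integers $S\ge 2$, $C\ge 2$ and an interval $I\subset\mathbb R$. Given are continuously differentiable real functions $f_{\mathrm{vle},i}(P,T,\mathbf x)$ ($i=1,\dots,C$), $f_{\mathrm{hl}}(T,\mathbf x)$, $f_{\mathrm{hv}}(T,\mathbf y)$, $f_{\mathrm{holdup}}(L)$. Controls are continuously differentiable real functions $\epsilon,P,Q,T^{\mathrm{cond}}$ on $I$. State variables: $n^j,H^j,T^j,V^j,s^j$, $\mathbf x^j,\mathbf y^j\in\mathbb R^C$ ($j=1,\dots,S$), $L^j$ ($j=1,\dots,S-1$); a solution is a tuple of continuously differentiable state functions satisfying all equations at every $t\in I$. "$2\le j\le S-1$" marks middle-stage equations. The relaxed system (R) consists of: (TM) $\dot n^1=L^1-V^1$; $\dot n^j=L^j-V^j-L^{j-1}+V^{j-1}$ ($2\le j\le S-1$); $\dot n^S=-\epsilon V^S-L^{S-1}+V^{S-1}$; (CM$_0$) for $i=1,\dots,C-1$: $\dot x_i^1=\big(L^1(x_i^2-x_i^1)-V^1(y_i^1-x_i^1)\big)/n^1$;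 $\dot x_i^j=\big(L^j(x_i^{j+1}-x_i^j)-V^j(y_i^j-x_i^j)+V^{j-1}(y_i^{j-1}-x_i^j)\big)/n^j$ ($2\le j\le S-1$); $\dot x_i^S=\big(\epsilon V^S(x_i^S-y_i^S)+V^{S-1}(y_i^{S-1}-x_i^S)\big)/n^S$; (EB) $\dot H^1=L^1f_{\mathrm{hl}}(T^2,\mathbf x^2)-V^1f_{\mathrm{hv}}(T^1,\mathbf y^1)+Q$; $\dot H^j=L^jf_{\mathrm{hl}}(T^{j+1},\mathbf x^{j+1})-V^jf_{\mathrm{hv}}(T^j,\mathbf y^j)-L^{j-1}f_{\mathrm{hl}}(T^j,\mathbf x^j)+V^{j-1}f_{\mathrm{hv}}(T^{j-1},\mathbf y^{j-1})$ ($2\le j\le S-1$); $\dot H^S=(1-\epsilon)V^Sf_{\mathrm{hl}}(T^{\mathrm{cond}},\mathbf y^S)-V^Sf_{\mathrm{hv}}(T^S,\mathbf y^S)-L^{S-1}f_{\mathrm{hl}}(T^S,\mathbf x^S)+V^{S-1}f_{\mathrm{hv}}(T^{S-1},\mathbf y^{S-1})$; and the algebraic equations $g=0$, with $\mathrm{aux}^1_0=\sum_{i=1}^C\big(L^1(x_i^2-x_i^1)-V^1(y_i^1-x_i^1)\big)/n^1$; for $2\le j\le S-1$, $\mathrm{aux}^j_0=\sum_{i=1}^C\big(L^j(x_i^{j+1}-x_i^j)-V^j(y_i^j-x_i^j)+V^{j-1}(y_i^{j-1}-x_i^j)\big)/n^j$; $\mathrm{aux}^S_0=\sum_{i=1}^C\big(\epsilon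 V^S(x_i^S-y_i^S)+V^{S-1}(y_i^{S-1}-x_i^S)\big)/n^S$; $\mathrm{slack}^j=\sum_{i=1}^Cy_i^j-1-s^j$; $\mathrm{ydef}_i^j=y_i^j-f_{\mathrm{vle},i}(P,T^j,\mathbf x^j)$, $\mathbf{ydef}^j=(\mathrm{ydef}_1^j,\dots,\mathrm{ydef}_C^j)$; $\mathrm{edef}^j=H^j-n^jf_{\mathrm{hl}}(T^j,\mathbf x^j)$; $\mathrm{xsum}^j=x_C^j-1+\sum_{i=1}^{C-1}x_i^j$; $\mathrm{hold}^j=n^j-f_{\mathrm{holdup}}(L^{j-1})$ ($j=2,\dots,S$); collected as $g=(\mathrm{aux}^S_0,\dots,\mathrm{aux}^1_0,\mathrm{slack}^1,\dots,\mathrm{slack}^S,\mathbf{ydef}^1,\dots,\mathbf{ydef}^S,\mathrm{edef}^1,\dots,\mathrm{edef}^S,\mathrm{xsum}^1,\dots,\mathrm{xsum}^S,\mathrm{hold}^2,\dots,\mathrm{hold}^S)$. Differential variables $\xi=(n^1,\dots,n^S,\hat{\mathbf x}^1,\dots,\hat{\mathbf x}^S,H^1,\dots,H^S)$, $\hat{\mathbf x}^j=(x^j_1,\dots,x^j_{C-1})$; algebraic variables $(\eta,s)=(V^S,\dots,V^1,s^1,\dots,s^S,\mathbf y^1,\dots,\mathbf y^S,T^1,\dots,T^S,x_C^1,\dots,x_C^S,L^1,\dots,L^{S-1})$. $D_{(\eta,s)}g$ is the Jacobian of $g$ with respect to $(\eta,s)$ (with $\xi$ and controls held fixed). *)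

theory Defs
  imports "HOL-Analysis.Analysis"
begin

text \<open>Components i = 1..C are labelled by a finite type 'c (CARD('c) = C) with a
distinguished element cC playing the role of the C-th component.\<close>

text \<open>Labels of the algebraic variables (eta,s) and of the algebraic equations g.\<close>
datatype 'c avar = AV nat | AS nat | AY nat 'c | AT nat | AXC nat | AL nat
datatype 'c geq = Gaux nat | Gslack nat | Gydef nat 'c | Gedef nat | Gxsum nat | Ghold nat

fun avar_valid :: "nat \<Rightarrow> 'c avar \<Rightarrow> bool" where
  "avar_valid S (AV j) = (1 \<le> j \<and> j \<le> S)"
| "avar_valid S (AS j) = (1 \<le> j \<and> j \<le> S)"
| "avar_valid S (AY j i) = (1 \<le> j \<and> j \<le> S)"
| "avar_valid S (AT j) = (1 \<le> j \<and> j \<le> S)"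
| "avar_valid S (AXC j) = (1 \<le> j \<and> j \<le> S)"
| "avar_valid S (AL j) = (1 \<le> j \<and> j \<le> S - 1)"

fun geq_valid :: "nat \<Rightarrow> 'c geq \<Rightarrow> bool" where
  "geq_valid S (Gaux j) = (1 \<le> j \<and> j \<le> S)"
| "geq_valid S (Gslack j) = (1 \<le> j \<and> j \<le> S)"
| "geq_valid S (Gydef j i) = (1 \<le> j \<and> j \<le> S)"
| "geq_valid S (Gedef j) = (1 \<le> j \<and> j \<le> S)"
| "geq_valid S (Gxsum j) = (1 \<le> j \<and> j \<le> S)"
| "geq_valid S (Ghold j) = (2 \<le> j \<and> j \<le> S)"

text \<open>Full composition vector x^j: components i \<noteq> cC from the differential part
(hat x^j), component cC from the algebraic variable x_C^j.\<close>
definition xfull :: "'c \<Rightarrow> (nat \<Rightarrow> real^'c) \<Rightarrow> ('c avar \<Rightarrow> real) \<Rightarrow> nat \<Rightarrow> real^'c" where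
  "xfull cC xh a j = (\<chi> i. if i = cC then a (AXC j) else xh j $ i)"

text \<open>The algebraic equations g, as a function of the algebraic variables a
(with the differential variables n, H, hat x and the controls eps, P held fixed).\<close>
definition gfun ::
  "nat \<Rightarrow> 'c::finite \<Rightarrow> ('c \<Rightarrow> real \<Rightarrow> real \<Rightarrow> real^'c \<Rightarrow> real) \<Rightarrow> (real \<Rightarrow> real^'c \<Rightarrow> real)
   \<Rightarrow> (real \<Rightarrow> real) \<Rightarrow> real \<Rightarrow> real \<Rightarrow> (nat \<Rightarrow> real) \<Rightarrow> (nat \<Rightarrow> real) \<Rightarrow> (nat \<Rightarrow> real^'c)
   \<Rightarrow> ('c avar \<Rightarrow> real) \<Rightarrow> 'c geq \<Rightarrow> real" where
  "gfun S cC fvle fhl fhold eps P n H xh a e =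
    (let x = xfull cC xh a; y = (\<lambda>j. \<chi> i. a (AY j i)); V = (\<lambda>j. a (AV j));
         L = (\<lambda>j. a (AL j)); T = (\<lambda>j. a (AT j)); s = (\<lambda>j. a (AS j)) in
     case e of
       Gaux j \<Rightarrow>
         (if j = 1 then (\<Sum>i\<in>UNIV. (L 1 * (x 2 $ i - x 1 $ i) - V 1 * (y 1 $ i - x 1 $ i)) / n 1)
          else if j = S then
            (\<Sum>i\<in>UNIV. (eps * V S * (x S $ i - y S $ i) + V (S - 1) * (y (S - 1) $ i - x S $ i)) / n S)
          else (\<Sum>i\<in>UNIV. (L j * (x (j + 1) $ i - x j $ i) - V j * (y j $ i - x j $ i)
                            + V (j - 1) * (y (j - 1) $ i - x j $ i)) / n j))
     | Gslack j \<Rightarrow> (\<Sum>i\<in>UNIV. y j $ i) - 1 - s j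
     | Gydef j i \<Rightarrow> y j $ i - fvle i P (T j) (x j)
     | Gedef j \<Rightarrow> H j - n j * fhl (T j) (x j)
     | Gxsum j \<Rightarrow> x j $ cC - 1 + (\<Sum>i\<in>UNIV - {cC}. x j $ i)
     | Ghold j \<Rightarrow> n j - fhold (L (j - 1)))"

definition gjac where
  "gjac S cC fvle fhl fhold eps P n H xh a e v =
     deriv (\<lambda>r. gfun S cC fvle fhl fhold eps P n H xh (a(v := r)) e) (a v)"

text \<open>Non-singularity: the (square) Jacobian, as a linear map between the spaces of
vectors indexed by the valid variable labels and the valid equation labels, is invertible.\<close>
definition jac_nonsingular where
  "jac_nonsingular S cC fvle fhl fhold eps P n H xh a \<longleftrightarrow>
     bij_betw
       (\<lambda>w e. if geq_valid S e
              then (\<Sum>v\<in>{v. avar_valid S v}. gjac S cC fvle fhl fhold eps P n H xh a e v * w v)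
              else 0)
       {w. \<forall>v. \<not> avar_valid S v \<longrightarrow> w v = 0}
       {u. \<forall>e. \<not> geq_valid S e \<longrightarrow> u e = 0}"

definition C1_map :: "('a::real_normed_vector \<Rightarrow> 'b::real_normed_vector) \<Rightarrow> bool" where
  "C1_map f \<longleftrightarrow> (\<exists>f'. (\<forall>z. (f has_derivative blinfun_apply (f' z)) (at z)) \<and> continuous_on UNIV f')"

definition C1_on :: "real set \<Rightarrow> (real \<Rightarrow> 'a::real_normed_vector) \<Rightarrow> bool" where
  "C1_on I f \<longleftrightarrow> (\<exists>f'. (\<forall>t\<in>I. (f has_vector_derivative f' t) (at t within I)) \<and> continuous_on I f')"

definition alg_state where
  "alg_state cC V s y T x L t =
     (\<lambda>v. case v of AV j \<Rightarrow> V j t | AS j \<Rightarrow> s j t | AY j i \<Rightarrow> y j t $ i | AT j \<Rightarrow> T j t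
                | AXC j \<Rightarrow> x j t $ cC | AL j \<Rightarrow> L j t)"

definition relaxed_solution ::
  "nat \<Rightarrow> 'c::finite \<Rightarrow> real set \<Rightarrow> ('c \<Rightarrow> real \<Rightarrow> real \<Rightarrow> real^'c \<Rightarrow> real) \<Rightarrow> (real \<Rightarrow> real^'c \<Rightarrow> real)
   \<Rightarrow> (real \<Rightarrow> real^'c \<Rightarrow> real) \<Rightarrow> (real \<Rightarrow> real)
   \<Rightarrow> (real \<Rightarrow> real) \<Rightarrow> (real \<Rightarrow> real) \<Rightarrow> (real \<Rightarrow> real) \<Rightarrow> (real \<Rightarrow> real)
   \<Rightarrow> (nat \<Rightarrow> real \<Rightarrow> real) \<Rightarrow> (nat \<Rightarrow> real \<Rightarrow> real) \<Rightarrow> (nat \<Rightarrow> real \<Rightarrow> real) \<Rightarrow> (nat \<Rightarrow> real \<Rightarrow> real)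
   \<Rightarrow> (nat \<Rightarrow> real \<Rightarrow> real) \<Rightarrow> (nat \<Rightarrow> real \<Rightarrow> real^'c) \<Rightarrow> (nat \<Rightarrow> real \<Rightarrow> real^'c)
   \<Rightarrow> (nat \<Rightarrow> real \<Rightarrow> real) \<Rightarrow> bool" where
  "relaxed_solution S cC I fvle fhl fhv fhold eps P Q Tc n H T V s x y L \<longleftrightarrow>
    (\<forall>j\<in>{1..S}. C1_on I (n j) \<and> C1_on I (H j) \<and> C1_on I (T j) \<and> C1_on I (V j)
                 \<and> C1_on I (s j) \<and> C1_on I (x j) \<and> C1_on I (y j)) \<and>
    (\<forall>j\<in>{1..S-1}. C1_on I (L j)) \<and>
    (\<forall>t\<in>I.
      \<comment> \<open>(TM)\<close>
      (n 1 has_real_derivative (L 1 t - V 1 t)) (at t within I) \<and>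
      (\<forall>j. 2 \<le> j \<and> j \<le> S - 1 \<longrightarrow>
         (n j has_real_derivative (L j t - V j t - L (j - 1) t + V (j - 1) t)) (at t within I)) \<and>
      (n S has_real_derivative (- eps t * V S t - L (S - 1) t + V (S - 1) t)) (at t within I) \<and>
      \<comment> \<open>(CM_0), i = 1..C-1, i.e. i \<noteq> cC\<close>
      (\<forall>i. i \<noteq> cC \<longrightarrow>
        ((\<lambda>t. x 1 t $ i) has_real_derivative
           ((L 1 t * (x 2 t $ i - x 1 t $ i) - V 1 t * (y 1 t $ i - x 1 t $ i)) / n 1 t)) (at t within I) \<and>
        (\<forall>j. 2 \<le> j \<and> j \<le> S - 1 \<longrightarrow>
          ((\<lambda>t. x j t $ i) has_real_derivative
            ((L j t * (x (j + 1) t $ i - x j t $ i) - V j t * (y j t $ i - x j t $ i)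
              + V (j - 1) t * (y (j - 1) t $ i - x j t $ i)) / n j t)) (at t within I)) \<and>
        ((\<lambda>t. x S t $ i) has_real_derivative
           ((eps t * V S t * (x S t $ i - y S t $ i) + V (S - 1) t * (y (S - 1) t $ i - x S t $ i)) / n S t))
           (at t within I)) \<and>
      \<comment> \<open>(EB)\<close>
      (H 1 has_real_derivative
         (L 1 t * fhl (T 2 t) (x 2 t) - V 1 t * fhv (T 1 t) (y 1 t) + Q t)) (at t within I) \<and>
      (\<forall>j. 2 \<le> j \<and> j \<le> S - 1 \<longrightarrow>
         (H j has_real_derivative
            (L j t * fhl (T (j + 1) t) (x (j + 1) t) - V j t * fhv (T j t) (y j t)
             - L (j - 1) t * fhl (T j t) (x j t) + V (j - 1) t * fhv (T (j - 1) t) (y (j - 1) t)))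
           (at t within I)) \<and>
      (H S has_real_derivative
         ((1 - eps t) * V S t * fhl (Tc t) (y S t) - V S t * fhv (T S t) (y S t)
          - L (S - 1) t * fhl (T S t) (x S t) + V (S - 1) t * fhv (T (S - 1) t) (y (S - 1) t)))
         (at t within I) \<and>
      \<comment> \<open>g = 0\<close>
      (\<forall>e. geq_valid S e \<longrightarrow>
         gfun S cC fvle fhl fhold (eps t) (P t) (\<lambda>j. n j t) (\<lambda>j. H j t) (\<lambda>j. x j t)
              (alg_state cC V s y T x L t) e = 0))"

end

theory Submission
  imports Defs
begin


lemma tri_solve:
  fixes M :: "'e \<Rightarrow> 'v \<Rightarrow> real" and rk :: "'v \<Rightarrow> nat" and phi :: "'v \<Rightarrow> 'e"
  assumes finA: "finite A"
    and tri: "\<And>v v'. v \<in> A \<Longrightarrow> v' \<in> A \<Longrightarrow> v' \<noteq> v \<Longrightarrow> \<not> rk v' < rk v \<Longrightarrow> M (phi v) v' = 0"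
    and diag: "\<And>v. v \<in> A \<Longrightarrow> k \<le> rk v \<Longrightarrow> M (phi v) v \<noteq> 0"
  shows "\<exists>w. (\<forall>v. (v \<notin> A \<or> rk v < k) \<longrightarrow> w v = 0) \<and>
             (\<forall>v\<in>A. k \<le> rk v \<longrightarrow> (\<Sum>v'\<in>A. M (phi v) v' * w v') = g v)"
proof -
  have "\<exists>w. (\<forall>v. \<not> (v \<in> A \<and> k \<le> rk v \<and> rk v < k + m) \<longrightarrow> w v = 0) \<and>
             (\<forall>v\<in>A. k \<le> rk v \<and> rk v < k + m \<longrightarrow> (\<Sum>v'\<in>A. M (phi v) v' * w v') = g v)" for m
  proof (induction m)
    case 0
    show ?case by (rule exI[of _ "\<lambda>_. 0"]) auto
  next
    case (Suc m)
    then obtain w where w1: "\<And>v. \<not> (v \<in> A \<and> k \<le> rk v \<and> rk v < k + m) \<Longrightarrow> w v = 0"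
      and w2: "\<And>v. v\<in>A \<Longrightarrow> k \<le> rk v \<Longrightarrow> rk v < k + m \<Longrightarrow> (\<Sum>v'\<in>A. M (phi v) v' * w v') = g v"
      by blast
    define w' where "w' = (\<lambda>v. if v \<in> A \<and> rk v = k + m
        then (g v - (\<Sum>v'\<in>A-{v}. M (phi v) v' * w v')) / M (phi v) v else w v)"
    have key: "M (phi v) v' * w' v' = M (phi v) v' * w v'"
      if "v \<in> A" "v' \<in> A" "rk v \<le> k + m" "\<not> (v' = v \<and> rk v = k + m)" for v v'
    proof (cases "M (phi v) v' = 0")
      case False
      then have "v' = v \<or> rk v' < rk v" using tri[OF that(1,2)] by blast
      then have "\<not> (v' \<in> A \<and> rk v' = k + m)" using that by auto
      then have "w' v' = w v'" unfolding w'_def by auto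
      then show ?thesis by simp
    qed simp
    show ?case
    proof (intro exI conjI allI ballI impI)
      fix v assume "\<not> (v \<in> A \<and> k \<le> rk v \<and> rk v < k + Suc m)"
      then show "w' v = 0" using w1[of v] by (auto simp: w'_def)
    next
      fix v assume vA: "v \<in> A" and r: "k \<le> rk v \<and> rk v < k + Suc m"
      show "(\<Sum>v'\<in>A. M (phi v) v' * w' v') = g v"
      proof (cases "rk v = k + m")
        case False
        have "(\<Sum>v'\<in>A. M (phi v) v' * w' v') = (\<Sum>v'\<in>A. M (phi v) v' * w v')"
          using key vA r False by (intro sum.cong) auto
        also have "\<dots> = g v" using w2 vA r False by auto
        finally show ?thesis .
      next
        case True
        have "(\<Sum>v'\<in>A. M (phi v) v' * w' v') = M (phi v) v * w' v + (\<Sum>v'\<in>A-{v}. M (phi v) v' * w' v')"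
          using finA vA by (simp add: sum.remove)
        also have "(\<Sum>v'\<in>A-{v}. M (phi v) v' * w' v') = (\<Sum>v'\<in>A-{v}. M (phi v) v' * w v')"
          using key vA r by (intro sum.cong) auto
        also have "M (phi v) v * w' v = g v - (\<Sum>v'\<in>A-{v}. M (phi v) v' * w v')"
          using diag[OF vA] r True vA by (simp add: w'_def)
        finally show ?thesis by simp
      qed
    qed
  qed
  moreover obtain m where "\<forall>v\<in>A. rk v < k + m"
  proof
    show "\<forall>v\<in>A. rk v < k + (Max (rk ` A) + 1)"
    proof
      fix v assume "v \<in> A"
      then have "rk v \<le> Max (rk ` A)" using finA by simp
      then show "rk v < k + (Max (rk ` A) + 1)" by simp
    qed
  qed
  ultimately obtain m w where bd: "\<forall>v\<in>A. rk v < k + m"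
    and w1: "\<forall>v. \<not> (v \<in> A \<and> k \<le> rk v \<and> rk v < k + m) \<longrightarrow> w v = 0"
    and w2: "\<forall>v\<in>A. k \<le> rk v \<and> rk v < k + m \<longrightarrow> (\<Sum>v'\<in>A. M (phi v) v' * w v') = g v"
    by blast
  show ?thesis
  proof (intro exI conjI allI ballI impI)
    fix v assume "v \<notin> A \<or> rk v < k"
    then show "w v = 0" using w1 by auto
  next
    fix v assume "v \<in> A" "k \<le> rk v"
    then show "(\<Sum>v'\<in>A. M (phi v) v' * w v') = g v" using w2 bd by blast
  qed
qed

lemma tri_bij:
  fixes M :: "'e \<Rightarrow> 'v \<Rightarrow> real" and rk :: "'v \<Rightarrow> nat" and phi :: "'v \<Rightarrow> 'e"
  assumes finA: "finite {v. pA v}" and bij: "bij_betw phi {v. pA v} {e. pB e}"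
    and tri: "\<And>v v'. pA v \<Longrightarrow> pA v' \<Longrightarrow> v' \<noteq> v \<Longrightarrow> \<not> rk v' < rk v \<Longrightarrow> M (phi v) v' = 0"
  shows "bij_betw (\<lambda>w e. if pB e then (\<Sum>v\<in>{v. pA v}. M e v * w v) else 0)
           {w. \<forall>v. \<not> pA v \<longrightarrow> w v = 0} {u. \<forall>e. \<not> pB e \<longrightarrow> u e = 0}
         \<longleftrightarrow> (\<forall>v. pA v \<longrightarrow> M (phi v) v \<noteq> 0)"
proof -
  define A where "A = {v. pA v}"
  define F where "F = (\<lambda>(w::'v\<Rightarrow>real) e. if pB e then (\<Sum>v\<in>A. M e v * w v) else 0)"
  have triA: "\<And>v v'. v \<in> A \<Longrightarrow> v' \<in> A \<Longrightarrow> v' \<noteq> v \<Longrightarrow> \<not> rk v' < rk v \<Longrightarrow> M (phi v) v' = 0"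
    using tri by (auto simp: A_def)
  have finA': "finite A" using finA by (simp add: A_def)
  have phiB: "pB (phi v)" if "v \<in> A" for v using bij that by (auto simp: bij_betw_def A_def)
  have Bphi: "\<exists>v\<in>A. e = phi v" if "pB e" for e using bij that by (auto simp: bij_betw_def A_def)
  have Frow: "F w (phi v) = (\<Sum>v'\<in>A. M (phi v) v' * w v')" if "v \<in> A" for w v
    using phiB[OF that] by (simp add: F_def)
  have "bij_betw F {w. \<forall>v. \<not> pA v \<longrightarrow> w v = 0} {u. \<forall>e. \<not> pB e \<longrightarrow> u e = 0}
         \<longleftrightarrow> (\<forall>v\<in>A. M (phi v) v \<noteq> 0)"
  proof
    assume b: "bij_betw F {w. \<forall>v. \<not> pA v \<longrightarrow> w v = 0} {u. \<forall>e. \<not> pB e \<longrightarrow> u e = 0}"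
    show "\<forall>v\<in>A. M (phi v) v \<noteq> 0"
    proof (rule ccontr)
      assume "\<not> (\<forall>v\<in>A. M (phi v) v \<noteq> 0)"
      define Z where "Z = {v\<in>A. M (phi v) v = 0}"
      have Zne: "Z \<noteq> {}" using \<open>\<not> (\<forall>v\<in>A. M (phi v) v \<noteq> 0)\<close> by (auto simp: Z_def)
      have finZ: "finite Z" using finA' by (simp add: Z_def)
      define K where "K = Max (rk ` Z)"
      have "K \<in> rk ` Z" using Max_in[of "rk ` Z"] finZ Zne by (simp add: K_def)
      then obtain v0 where v0Z: "v0 \<in> Z" and rv0: "rk v0 = K" by auto
      have Zle: "rk v \<le> K" if "v \<in> Z" for v using finZ that by (simp add: K_def)
      have v0A: "v0 \<in> A" and Mv0: "M (phi v0) v0 = 0" using v0Z by (auto simp: Z_def)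
      obtain w where wz: "\<forall>v. (v \<notin> A \<or> rk v < K + 1) \<longrightarrow> w v = 0"
        and wr: "\<forall>v\<in>A. K + 1 \<le> rk v \<longrightarrow> (\<Sum>v'\<in>A. M (phi v) v' * w v') = - M (phi v) v0"
        using tri_solve[where M=M and rk=rk and phi=phi and A=A, OF finA' triA, of "K+1" "\<lambda>v. - M (phi v) v0"] Zle
        by (force simp: Z_def)
      define w' where "w' = (\<lambda>v'. w v' + (if v' = v0 then 1 else 0))"
      have "w' \<in> {w. \<forall>v. \<not> pA v \<longrightarrow> w v = 0}" using wz v0A by (auto simp: w'_def A_def)
      moreover have "(\<lambda>_. 0) \<in> {w::'v\<Rightarrow>real. \<forall>v. \<not> pA v \<longrightarrow> w v = 0}" by simp
      moreover have "F w' = F (\<lambda>_. 0)"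
      proof
        fix e
        show "F w' e = F (\<lambda>_. 0) e"
        proof (cases "pB e")
          case False then show ?thesis by (simp add: F_def)
        next
          case True
          then obtain v where vA: "v \<in> A" and e: "e = phi v" using Bphi by blast
          have s1: "(\<Sum>v'\<in>A. M (phi v) v' * w' v') = (\<Sum>v'\<in>A. M (phi v) v' * w v')
               + (\<Sum>v'\<in>A. M (phi v) v' * (if v' = v0 then 1 else 0))"
            by (simp add: w'_def distrib_left sum.distrib)
          have "(\<Sum>v'\<in>A. M (phi v) v' * (if v' = v0 then 1 else 0)) = (\<Sum>v'\<in>A. if v' = v0 then M (phi v) v0 else 0)"
            by (rule sum.cong) auto
          also have "\<dots> = M (phi v) v0" using finA' v0A by simp
          finally have "F w' e = (\<Sum>v'\<in>A. M (phi v) v' * w v') + M (phi v) v0"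
            using Frow[OF vA] s1 e by simp
          also have "\<dots> = 0"
          proof (cases "K + 1 \<le> rk v")
            case True then show ?thesis using wr vA by simp
          next
            case False
            have "(\<Sum>v'\<in>A. M (phi v) v' * w v') = 0"
            proof (intro sum.neutral ballI)
              fix v' assume v'A: "v' \<in> A"
              show "M (phi v) v' * w v' = 0"
              proof (cases "rk v' < K + 1")
                case True then show ?thesis using wz by simp
              next
                case f2: False
                then have "v' \<noteq> v" "\<not> rk v' < rk v" using False by auto
                then show ?thesis using triA[OF vA v'A] by simp
              qed
            qed
            moreover have "M (phi v) v0 = 0"
            proof (cases "v = v0")
              case True then show ?thesis using Mv0 by simp
            next
              case f3: False
              then show ?thesis using triA[OF vA v0A] False rv0 by simp
            qed
            ultimately show ?thesis by simp
          qed
          finally show ?thesis by (simp add: F_def)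
        qed
      qed
      ultimately have "w' = (\<lambda>_. 0)" using b by (auto simp: bij_betw_def inj_on_def)
      then have "w' v0 = 0" by simp
      then show False using wz v0A rv0 by (simp add: w'_def)
    qed
  next
    assume dg: "\<forall>v\<in>A. M (phi v) v \<noteq> 0"
    have inj: "inj_on F {w. \<forall>v. \<not> pA v \<longrightarrow> w v = 0}"
    proof (rule inj_onI)
      fix w1 w2 assume w1: "w1 \<in> {w. \<forall>v. \<not> pA v \<longrightarrow> w v = 0}" and w2: "w2 \<in> {w. \<forall>v. \<not> pA v \<longrightarrow> w v = 0}"
        and eq: "F w1 = F w2"
      define d where "d = (\<lambda>v. w1 v - w2 v)"
      have rowd: "(\<Sum>v'\<in>A. M (phi v) v' * d v') = 0" if "v \<in> A" for v
      proof -
        have "(\<Sum>v'\<in>A. M (phi v) v' * d v') = F w1 (phi v) - F w2 (phi v)"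
          using Frow[OF that] by (simp add: d_def right_diff_distrib sum_subtractf)
        then show ?thesis using eq by simp
      qed
      have dz: "\<And>v. v \<in> A \<longrightarrow> d v = 0"
      proof -
        fix v show "v \<in> A \<longrightarrow> d v = 0" 
      proof (induction v rule: measure_induct_rule[of rk])
        case (less v)
        show ?case
        proof
          assume vA: "v \<in> A"
          have "(\<Sum>v'\<in>A. M (phi v) v' * d v') = M (phi v) v * d v + (\<Sum>v'\<in>A-{v}. M (phi v) v' * d v')"
            using finA' vA by (simp add: sum.remove)
          also have "(\<Sum>v'\<in>A-{v}. M (phi v) v' * d v') = 0"
          proof (intro sum.neutral ballI)
            fix v' assume v': "v' \<in> A - {v}"
            show "M (phi v) v' * d v' = 0"
            proof (cases "rk v' < rk v")
              case True then show ?thesis using less v' by simp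
            next
              case False then show ?thesis using triA[OF vA, of v'] v' by simp
            qed
          qed
          finally have "M (phi v) v * d v = 0" using rowd[OF vA] by simp
          then show "d v = 0" using dg vA by simp
        qed
      qed
      qed
      show "w1 = w2"
      proof
        fix v show "w1 v = w2 v"
        proof (cases "pA v")
          case True then have "d v = 0" using \<open>\<And>v. v \<in> A \<longrightarrow> d v = 0\<close> by (simp add: A_def)
          then show ?thesis by (simp add: d_def)
        next
          case False then show ?thesis using w1 w2 by simp
        qed
      qed
    qed
    have img: "F ` {w. \<forall>v. \<not> pA v \<longrightarrow> w v = 0} = {u. \<forall>e. \<not> pB e \<longrightarrow> u e = 0}"
    proof
      show "F ` {w. \<forall>v. \<not> pA v \<longrightarrow> w v = 0} \<subseteq> {u. \<forall>e. \<not> pB e \<longrightarrow> u e = 0}"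
        by (auto simp: F_def)
    next
      show "{u. \<forall>e. \<not> pB e \<longrightarrow> u e = 0} \<subseteq> F ` {w. \<forall>v. \<not> pA v \<longrightarrow> w v = 0}"
      proof
        fix u :: "'e \<Rightarrow> real" assume u: "u \<in> {u. \<forall>e. \<not> pB e \<longrightarrow> u e = 0}"
        obtain w where wz: "\<forall>v. (v \<notin> A \<or> rk v < 0) \<longrightarrow> w v = 0"
          and wr: "\<forall>v\<in>A. 0 \<le> rk v \<longrightarrow> (\<Sum>v'\<in>A. M (phi v) v' * w v') = u (phi v)"
          using tri_solve[where M=M and rk=rk and phi=phi and A=A, OF finA' triA, of 0 "\<lambda>v. u (phi v)"] dg by blast
        have "F w = u"
        proof
          fix e show "F w e = u e"
          proof (cases "pB e")
            case False then show ?thesis using u by (simp add: F_def)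
          next
            case True
            then obtain v where vA: "v \<in> A" and e: "e = phi v" using Bphi by blast
            show ?thesis using Frow[OF vA] wr vA e by simp
          qed
        qed
        moreover have "w \<in> {w. \<forall>v. \<not> pA v \<longrightarrow> w v = 0}" using wz by (auto simp: A_def)
        ultimately show "u \<in> F ` {w. \<forall>v. \<not> pA v \<longrightarrow> w v = 0}" by blast
      qed
    qed
    show "bij_betw F {w. \<forall>v. \<not> pA v \<longrightarrow> w v = 0} {u. \<forall>e. \<not> pB e \<longrightarrow> u e = 0}"
      using inj img by (simp add: bij_betw_def)
  qed
  then show ?thesis unfolding F_def A_def by simp
qed

fun rk :: "'c avar \<Rightarrow> nat" where
  "rk (AXC j) = 0" | "rk (AL j) = 1" | "rk (AT j) = 2" | "rk (AY j i) = 3" | "rk (AS j) = 4"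
| "rk (AV j) = 5 + j"

fun phi :: "'c avar \<Rightarrow> 'c geq" where
  "phi (AXC j) = Gxsum j" | "phi (AL j) = Ghold (j + 1)" | "phi (AT j) = Gedef j"
| "phi (AY j i) = Gydef j i" | "phi (AS j) = Gslack j" | "phi (AV j) = Gaux j"

lemma fin_avar: "finite {v::'c::finite avar. avar_valid S v}"
proof (rule finite_subset)
  show "{v::'c avar. avar_valid S v} \<subseteq> AV ` {1..S} \<union> AS ` {1..S} \<union> (\<lambda>(j,i). AY j i) ` ({1..S} \<times> UNIV)
      \<union> AT ` {1..S} \<union> AXC ` {1..S} \<union> AL ` {1..S-1}"
  proof
    fix v :: "'c avar" assume "v \<in> {v. avar_valid S v}"
    then show "v \<in> AV ` {1..S} \<union> AS ` {1..S} \<union> (\<lambda>(j,i). AY j i) ` ({1..S} \<times> UNIV)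
      \<union> AT ` {1..S} \<union> AXC ` {1..S} \<union> AL ` {1..S-1}"
      by (cases v) auto
  qed
qed simp

lemma bij_phi: "S \<ge> 2 \<Longrightarrow> bij_betw phi {v::'c avar. avar_valid S v} {e. geq_valid S e}"
  unfolding bij_betw_def
proof
  show "inj_on phi {v::'c avar. avar_valid S v}"
  proof (rule inj_onI)
    fix v w :: "'c avar" assume "phi v = phi w"
    then show "v = w" by (cases v; cases w) auto
  qed
  assume S2: "S \<ge> 2"
  show "phi ` {v::'c avar. avar_valid S v} = {e. geq_valid S e}"
  proof
    show "phi ` {v::'c avar. avar_valid S v} \<subseteq> {e. geq_valid S e}"
    proof
      fix e assume "e \<in> phi ` {v::'c avar. avar_valid S v}"
      then obtain v where "avar_valid S v" "e = phi v" by auto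
      then show "e \<in> {e. geq_valid S e}" by (cases v) auto
    qed
    show "{e. geq_valid S e} \<subseteq> phi ` {v::'c avar. avar_valid S v}"
    proof
      fix e :: "'c geq" assume "e \<in> {e. geq_valid S e}"
      then show "e \<in> phi ` {v::'c avar. avar_valid S v}"
      proof (cases e)
        case (Ghold j)
        then have "e = phi (AL (j - 1))" "avar_valid S (AL (j - 1) :: 'c avar)"
          using \<open>e \<in> {e. geq_valid S e}\<close> by auto
        then show ?thesis by blast
      qed (auto intro: image_eqI[where x="AV _"] image_eqI[where x="AS _"] image_eqI[where x="AY _ _"]
             image_eqI[where x="AT _"] image_eqI[where x="AXC _"])
    qed
  qed
qed

lemma xfull_upd: "v \<noteq> AXC j \<Longrightarrow> xfull cC xh (a(v := r)) j = xfull cC xh a j"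
  unfolding xfull_def fun_upd_apply by simp

lemma gfun_indep:
  assumes "avar_valid S v" "avar_valid S v'" "v' \<noteq> v" "\<not> rk v' < rk v"
  shows "gfun S cC fvle fhl fhold e P n H xh (a(v' := r)) (phi v) = gfun S cC fvle fhl fhold e P n H xh a (phi v)"
  using assms
  unfolding gfun_def Let_def
  apply (cases v; cases v')
                      apply (simp_all add: xfull_upd fun_upd_apply)
  apply auto
  done

lemma deriv_constfun: "(\<And>r. f r = c) \<Longrightarrow> deriv f z = 0"
proof -
  assume "\<And>r. f r = c"
  then have "f = (\<lambda>r. c)" by (rule ext)
  then show ?thesis by simp
qed

lemma xfull_nth: "xfull cC xh a j $ i = (if i = cC then a (AXC j) else xh j $ i)"
  by (simp add: xfull_def)

lemma xfull_sum: "(\<Sum>i\<in>UNIV-{cC}. xfull cC xh b j $ i) = (\<Sum>i\<in>UNIV-{cC}. xh j $ i)"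
  by (rule sum.cong) (auto simp: xfull_nth)

lemma xfull_alg: "xfull cC (\<lambda>j. x j t) (alg_state cC V s y T x L t) j = x j t"
  by (simp add: xfull_def alg_state_def vec_eq_iff)

lemma alg_simps:
  "alg_state cC V s y T x L t (AV j) = V j t"
  "alg_state cC V s y T x L t (AS j) = s j t"
  "alg_state cC V s y T x L t (AY j i) = y j t $ i"
  "alg_state cC V s y T x L t (AT j) = T j t"
  "alg_state cC V s y T x L t (AXC j) = x j t $ cC"
  "alg_state cC V s y T x L t (AL j) = L j t"
  by (simp_all add: alg_state_def)

lemma sum_split_cC: "(\<Sum>i\<in>UNIV. f i) = f cC + (\<Sum>i\<in>UNIV-{cC}. f i)" for f :: "'c::finite \<Rightarrow> real"
  by (simp add: sum.remove)



lemma pointwise: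
  fixes S :: nat and cC :: "'c::finite"
    and fvle :: "'c \<Rightarrow> real \<Rightarrow> real \<Rightarrow> real^'c \<Rightarrow> real"
    and fhl :: "real \<Rightarrow> real^'c \<Rightarrow> real" and fhold :: "real \<Rightarrow> real"
    and eps P :: "real \<Rightarrow> real"
    and n H T V s L :: "nat \<Rightarrow> real \<Rightarrow> real" and x y :: "nat \<Rightarrow> real \<Rightarrow> real^'c"
  assumes S2: "S \<ge> 2"
    and Cfhl: "C1_map (\<lambda>(tt, xx). fhl tt xx)" and Chold: "C1_map fhold"
    and gz: "\<forall>e. geq_valid S e \<longrightarrow> gfun S cC fvle fhl fhold (eps t) (P t) (\<lambda>j. n j t) (\<lambda>j. H j t)
               (\<lambda>j. x j t) (alg_state cC V s y T x L t) e = 0"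
    and epsnz: "eps t \<noteq> 0" and nnz: "\<forall>j\<in>{1..S}. n j t \<noteq> 0"
    and fhlnz: "\<forall>j\<in>{1..S}. deriv (\<lambda>tt. fhl tt (x j t)) (T j t) \<noteq> 0"
    and holdnz: "\<forall>j\<in>{1..S-1}. deriv fhold (L j t) \<noteq> 0"
  shows "jac_nonsingular S cC fvle fhl fhold (eps t) (P t) (\<lambda>j. n j t) (\<lambda>j. H j t) (\<lambda>j. x j t)
           (alg_state cC V s y T x L t) \<longleftrightarrow> (\<forall>j\<in>{1..S}. s j t \<noteq> 0)"
proof -
  define a where "a = alg_state cC V s y T x L t"
  define G where "G = gfun S cC fvle fhl fhold (eps t) (P t) (\<lambda>j. n j t) (\<lambda>j. H j t) (\<lambda>j. x j t)"
  define M where "M = (\<lambda>e v. gjac S cC fvle fhl fhold (eps t) (P t) (\<lambda>j. n j t) (\<lambda>j. H j t) (\<lambda>j. x j t) a e v)"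
  have Mdef: "M e v = deriv (\<lambda>r. G (a(v := r)) e) (a v)" for e v
    by (simp add: M_def gjac_def G_def)
  have xa: "xfull cC (\<lambda>j. x j t) a j = x j t" for j by (simp add: a_def xfull_alg)
  have aS: "a (AV j) = V j t" "a (AS j) = s j t" "a (AY j i) = y j t $ i" "a (AT j) = T j t"
    "a (AXC j) = x j t $ cC" "a (AL j) = L j t" for j i by (simp_all add: a_def alg_simps)
  have sumx: "(\<Sum>i\<in>UNIV. x j t $ i) = 1" if "1 \<le> j" "j \<le> S" for j
  proof -
    have "G a (Gxsum j) = 0" using gz that by (simp add: G_def a_def)
    then have "x j t $ cC - 1 + (\<Sum>i\<in>UNIV-{cC}. x j t $ i) = 0"
      by (simp add: G_def gfun_def Let_def xa)
    then show ?thesis by (simp add: sum_split_cC[of _ cC])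
  qed
  have sumy: "(\<Sum>i\<in>UNIV. y j t $ i) = 1 + s j t" if "1 \<le> j" "j \<le> S" for j
  proof -
    have "G a (Gslack j) = 0" using gz that by (simp add: G_def a_def)
    then show ?thesis by (simp add: G_def gfun_def Let_def aS)
  qed
  have "jac_nonsingular S cC fvle fhl fhold (eps t) (P t) (\<lambda>j. n j t) (\<lambda>j. H j t) (\<lambda>j. x j t) a
        \<longleftrightarrow> (\<forall>v. avar_valid S v \<longrightarrow> M (phi v) v \<noteq> 0)"
    unfolding jac_nonsingular_def M_def
  proof (rule tri_bij[OF fin_avar bij_phi[OF S2]])
    fix v v' :: "'c avar"
    assume h: "avar_valid S v" "avar_valid S v'" "v' \<noteq> v" "\<not> rk v' < rk v"
    show "gjac S cC fvle fhl fhold (eps t) (P t) (\<lambda>j. n j t) (\<lambda>j. H j t) (\<lambda>j. x j t) a (phi v) v' = 0"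
      unfolding gjac_def by (rule deriv_constfun) (rule gfun_indep[OF h])
  qed
  also have "\<dots> \<longleftrightarrow> (\<forall>j\<in>{1..S}. s j t \<noteq> 0)"
  proof -
    have d1: "M (Gxsum j) (AXC j) = 1" for j
    proof -
      have "deriv (\<lambda>r. G (a(AXC j := r)) (Gxsum j)) z = 1" for z
      proof -
        have "(\<lambda>r. G (a(AXC j := r)) (Gxsum j)) = (\<lambda>r. r + ((\<Sum>i\<in>UNIV-{cC}. x j t $ i) - 1))"
          by (rule ext) (simp add: G_def gfun_def Let_def xfull_sum xfull_nth)
        moreover have "((\<lambda>r. r + ((\<Sum>i\<in>UNIV-{cC}. x j t $ i) - 1)) has_real_derivative 1) (at z)"
          by (auto intro!: derivative_eq_intros)
        ultimately show ?thesis by (simp add: DERIV_imp_deriv)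
      qed
      then show ?thesis by (simp add: Mdef)
    qed
    have d2: "M (Ghold (j + 1)) (AL j) = - deriv fhold (L j t)" for j
    proof -
      obtain f' where f': "\<forall>z. (fhold has_derivative blinfun_apply (f' z)) (at z)"
        using Chold by (auto simp: C1_map_def)
      have dh: "(fhold has_real_derivative deriv fhold z) (at z)" for z
        using f' unfolding DERIV_deriv_iff_real_differentiable differentiable_def by blast
      have "(\<lambda>r. G (a(AL j := r)) (Ghold (j + 1))) = (\<lambda>r. n (j + 1) t - fhold r)"
        by (rule ext) (simp add: G_def gfun_def Let_def)
      moreover have "((\<lambda>r. n (j + 1) t - fhold r) has_real_derivative - deriv fhold z) (at z)" for z
        using dh[of z] by (auto intro!: derivative_eq_intros)
      ultimately show ?thesis by (simp add: Mdef DERIV_imp_deriv aS)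
    qed
    have d3: "M (Gedef j) (AT j) = - n j t * deriv (\<lambda>tt. fhl tt (x j t)) (T j t)" for j
    proof -
      obtain f' where f': "\<forall>z. ((\<lambda>(tt, xx). fhl tt xx) has_derivative blinfun_apply (f' z)) (at z)"
        using Cfhl by (auto simp: C1_map_def)
      have "(\<lambda>r. fhl r (x j t)) differentiable at z" for z
      proof -
        have hp: "((\<lambda>r. (r, x j t)) has_derivative (\<lambda>h. (h, 0))) (at z)"
          by (intro has_derivative_Pair has_derivative_ident has_derivative_const)
        have "((\<lambda>(tt, xx). fhl tt xx) \<circ> (\<lambda>r. (r, x j t)) has_derivative
               (blinfun_apply (f' (z, x j t)) \<circ> (\<lambda>h. (h, 0)))) (at z)"
          by (rule diff_chain_at[OF hp]) (use f' in simp)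
        then show ?thesis unfolding differentiable_def o_def by (simp only: prod.case, blast)
      qed
      then have dh: "((\<lambda>r. fhl r (x j t)) has_real_derivative deriv (\<lambda>tt. fhl tt (x j t)) z) (at z)" for z
        by (simp add: DERIV_deriv_iff_real_differentiable)
      have "(\<lambda>r. G (a(AT j := r)) (Gedef j)) = (\<lambda>r. H j t - n j t * fhl r (x j t))"
        by (rule ext) (simp add: G_def gfun_def Let_def xfull_upd xa)
      moreover have "((\<lambda>r. H j t - n j t * fhl r (x j t)) has_real_derivative
            - n j t * deriv (\<lambda>tt. fhl tt (x j t)) z) (at z)" for z
        using dh[of z] by (auto intro!: derivative_eq_intros)
      ultimately show ?thesis by (simp add: Mdef DERIV_imp_deriv aS)
    qed
    have d4: "M (Gydef j i) (AY j i) = 1" for j i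
    proof -
      have "(\<lambda>r. G (a(AY j i := r)) (Gydef j i)) = (\<lambda>r. r - fvle i (P t) (T j t) (x j t))"
        by (rule ext) (simp add: G_def gfun_def Let_def xfull_upd xa aS)
      moreover have "((\<lambda>r. r - fvle i (P t) (T j t) (x j t)) has_real_derivative 1) (at z)" for z
        by (auto intro!: derivative_eq_intros)
      ultimately show ?thesis by (simp add: Mdef DERIV_imp_deriv)
    qed
    have d5: "M (Gslack j) (AS j) = -1" for j
    proof -
      have "(\<lambda>r. G (a(AS j := r)) (Gslack j)) = (\<lambda>r. (\<Sum>i\<in>UNIV. y j t $ i) - 1 - r)"
        by (rule ext) (simp add: G_def gfun_def Let_def aS)
      moreover have "((\<lambda>r. (\<Sum>i\<in>UNIV. y j t $ i) - 1 - r) has_real_derivative -1) (at z)" for z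
        by (auto intro!: derivative_eq_intros)
      ultimately show ?thesis by (simp add: Mdef DERIV_imp_deriv)
    qed
    have d6: "M (Gaux j) (AV j) = (if j = S then - eps t * s j t / n j t else - s j t / n j t)"
      if j: "1 \<le> j" "j \<le> S" for j
    proof (cases "j = 1")
      case True
      have nzj: "n 1 t \<noteq> 0" using nnz S2 by auto
      have "(\<lambda>r. G (a(AV j := r)) (Gaux j)) = (\<lambda>r. \<Sum>i\<in>UNIV.
          (L 1 t * (x 2 t $ i - x 1 t $ i) - r * (y 1 t $ i - x 1 t $ i)) / n 1 t)"
        by (rule ext) (simp add: G_def gfun_def Let_def xfull_upd xa aS True)
      moreover have "((\<lambda>r. \<Sum>i\<in>UNIV.
          (L 1 t * (x 2 t $ i - x 1 t $ i) - r * (y 1 t $ i - x 1 t $ i)) / n 1 t) has_real_derivative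
          (\<Sum>i\<in>UNIV. - (y 1 t $ i - x 1 t $ i) / n 1 t)) (at z)" for z
        using nzj by (intro DERIV_sum) (auto intro!: derivative_eq_intros)
      moreover have "(\<Sum>i\<in>UNIV. - (y 1 t $ i - x 1 t $ i) / n 1 t) = - s 1 t / n 1 t"
        using sumx[of 1] sumy[of 1] S2
        by (simp add: sum_negf sum_divide_distrib[symmetric] sum_subtractf)
      ultimately show ?thesis using True S2 by (simp add: Mdef DERIV_imp_deriv)
    next
      case F1: False
      show ?thesis
      proof (cases "j = S")
        case True
        have nzj: "n S t \<noteq> 0" using nnz S2 by auto
        have "(\<lambda>r. G (a(AV j := r)) (Gaux j)) = (\<lambda>r. \<Sum>i\<in>UNIV.
            (eps t * r * (x S t $ i - y S t $ i) + V (S - 1) t * (y (S - 1) t $ i - x S t $ i)) / n S t)"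
          using S2 by (intro ext) (simp add: G_def gfun_def Let_def xfull_upd xa aS True)
        moreover have "((\<lambda>r. \<Sum>i\<in>UNIV.
            (eps t * r * (x S t $ i - y S t $ i) + V (S - 1) t * (y (S - 1) t $ i - x S t $ i)) / n S t)
             has_real_derivative (\<Sum>i\<in>UNIV. eps t * (x S t $ i - y S t $ i) / n S t)) (at z)" for z
          using nzj by (intro DERIV_sum) (auto intro!: derivative_eq_intros)
        moreover have "(\<Sum>i\<in>UNIV. eps t * (x S t $ i - y S t $ i) / n S t) = - eps t * s S t / n S t"
          using sumx[of S] sumy[of S] S2
          by (simp add: sum_divide_distrib[symmetric] sum_distrib_left[symmetric] sum_subtractf)
        ultimately show ?thesis using True by (simp add: Mdef DERIV_imp_deriv)
      next
        case False
        have nzj: "n j t \<noteq> 0" using nnz j by auto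
        have "(\<lambda>r. G (a(AV j := r)) (Gaux j)) = (\<lambda>r. \<Sum>i\<in>UNIV.
            (L j t * (x (j + 1) t $ i - x j t $ i) - r * (y j t $ i - x j t $ i)
              + V (j - 1) t * (y (j - 1) t $ i - x j t $ i)) / n j t)"
          using F1 False j by (intro ext) (simp add: G_def gfun_def Let_def xfull_upd xa aS)
        moreover have "((\<lambda>r. \<Sum>i\<in>UNIV.
            (L j t * (x (j + 1) t $ i - x j t $ i) - r * (y j t $ i - x j t $ i)
              + V (j - 1) t * (y (j - 1) t $ i - x j t $ i)) / n j t) has_real_derivative
            (\<Sum>i\<in>UNIV. - (y j t $ i - x j t $ i) / n j t)) (at z)" for z
          using nzj by (intro DERIV_sum) (auto intro!: derivative_eq_intros)
        moreover have "(\<Sum>i\<in>UNIV. - (y j t $ i - x j t $ i) / n j t) = - s j t / n j t"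
          using sumx[OF j] sumy[OF j]
          by (simp add: sum_negf sum_divide_distrib[symmetric] sum_subtractf)
        ultimately show ?thesis using False by (simp add: Mdef DERIV_imp_deriv)
      qed
    qed
    show ?thesis
    proof
      assume h: "\<forall>v. avar_valid S v \<longrightarrow> M (phi v) v \<noteq> 0"
      show "\<forall>j\<in>{1..S}. s j t \<noteq> 0"
      proof
        fix j assume j: "j \<in> {1..S}"
        then have "M (Gaux j) (AV j) \<noteq> 0" using h[rule_format, of "AV j"] by simp
        then show "s j t \<noteq> 0" using d6[of j] j by (auto split: if_splits)
      qed
    next
      assume h: "\<forall>j\<in>{1..S}. s j t \<noteq> 0"
      show "\<forall>v. avar_valid S v \<longrightarrow> M (phi v) v \<noteq> 0"
      proof (intro allI impI)
        fix v :: "'c avar" assume v: "avar_valid S v"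
        show "M (phi v) v \<noteq> 0"
        proof (cases v)
          case (AV j) then show ?thesis using v d6[of j] h epsnz nnz by auto
        next
          case (AS j) then show ?thesis using d5 by simp
        next
          case (AY j i) then show ?thesis using d4 by simp
        next
          case (AT j) then show ?thesis using v d3[of j] nnz fhlnz by auto
        next
          case (AXC j) then show ?thesis using d1 by simp
        next
          case (AL j) then show ?thesis using v d2[of j] holdnz by auto
        qed
      qed
    qed
  qed
  finally show ?thesis by (simp add: a_def)
qed

theorem mainTheorem8:
  fixes S :: nat and cC :: "'c::finite" and I :: "real set"
    and fvle :: "'c \<Rightarrow> real \<Rightarrow> real \<Rightarrow> real^'c \<Rightarrow> real"
    and fhl fhv :: "real \<Rightarrow> real^'c \<Rightarrow> real" and fhold :: "real \<Rightarrow> real"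
    and eps P Q Tc :: "real \<Rightarrow> real"
    and n H T V s L :: "nat \<Rightarrow> real \<Rightarrow> real" and x y :: "nat \<Rightarrow> real \<Rightarrow> real^'c"
  assumes "S \<ge> 2" and "CARD('c) \<ge> 2" and "is_interval I"
    and "\<And>i. C1_map (\<lambda>(p, tt, xx). fvle i p tt xx)"
    and "C1_map (\<lambda>(tt, xx). fhl tt xx)" and "C1_map (\<lambda>(tt, yy). fhv tt yy)" and "C1_map fhold"
    and "C1_on I eps" and "C1_on I P" and "C1_on I Q" and "C1_on I Tc"
    and "relaxed_solution S cC I fvle fhl fhv fhold eps P Q Tc n H T V s x y L"
    and "\<forall>t\<in>I. eps t \<noteq> 0"
    and "\<forall>t\<in>I. \<forall>j\<in>{1..S}. n j t \<noteq> 0"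
    and "\<forall>t\<in>I. \<forall>j\<in>{1..S}. deriv (\<lambda>tt. fhl tt (x j t)) (T j t) \<noteq> 0"
    and "\<forall>t\<in>I. \<forall>j\<in>{1..S-1}. deriv fhold (L j t) \<noteq> 0"
  shows "(\<forall>t\<in>I. jac_nonsingular S cC fvle fhl fhold (eps t) (P t) (\<lambda>j. n j t) (\<lambda>j. H j t)
                   (\<lambda>j. x j t) (alg_state cC V s y T x L t))
         \<longleftrightarrow> (\<forall>t\<in>I. \<forall>j\<in>{1..S}. s j t \<noteq> 0)"
  proof -
  have sol: "\<forall>t\<in>I. \<forall>e. geq_valid S e \<longrightarrow> gfun S cC fvle fhl fhold (eps t) (P t) (\<lambda>j. n j t) (\<lambda>j. H j t)
               (\<lambda>j. x j t) (alg_state cC V s y T x L t) e = 0"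
  proof
    fix t assume t: "t \<in> I"
    note rs = assms(12)[unfolded relaxed_solution_def, THEN conjunct2, THEN conjunct2]
    show "\<forall>e. geq_valid S e \<longrightarrow> gfun S cC fvle fhl fhold (eps t) (P t) (\<lambda>j. n j t) (\<lambda>j. H j t)
               (\<lambda>j. x j t) (alg_state cC V s y T x L t) e = 0"
      using bspec[OF rs t] by (elim conjE) assumption
  qed
  have pw: "jac_nonsingular S cC fvle fhl fhold (eps t) (P t) (\<lambda>j. n j t) (\<lambda>j. H j t)
                   (\<lambda>j. x j t) (alg_state cC V s y T x L t) \<longleftrightarrow> (\<forall>j\<in>{1..S}. s j t \<noteq> 0)"
    if t: "t \<in> I" for t
  proof -
    have g: "\<forall>e. geq_valid S e \<longrightarrow> gfun S cC fvle fhl fhold (eps t) (P t) (\<lambda>j. n j t) (\<lambda>j. H j t)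
               (\<lambda>j. x j t) (alg_state cC V s y T x L t) e = 0"
      by (rule bspec[OF sol t])
    have e1: "eps t \<noteq> 0" by (rule bspec[OF assms(13) t])
    have e2: "\<forall>j\<in>{1..S}. n j t \<noteq> 0" by (rule bspec[OF assms(14) t])
    have e3: "\<forall>j\<in>{1..S}. deriv (\<lambda>tt. fhl tt (x j t)) (T j t) \<noteq> 0" by (rule bspec[OF assms(15) t])
    have e4: "\<forall>j\<in>{1..S-1}. deriv fhold (L j t) \<noteq> 0" by (rule bspec[OF assms(16) t])
    show ?thesis by (rule pointwise[where t=t and eps=eps and P=P and n=n and H=H and x=x and V=V and s=s and y=y and T=T and L=L and cC=cC and fvle=fvle and fhl=fhl and fhold=fhold, OF assms(1) assms(5) assms(7) g e1 e2 e3 e4])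
  qed
  show ?thesis
  proof
    assume h: "\<forall>t\<in>I. jac_nonsingular S cC fvle fhl fhold (eps t) (P t) (\<lambda>j. n j t) (\<lambda>j. H j t)
                   (\<lambda>j. x j t) (alg_state cC V s y T x L t)"
    show "\<forall>t\<in>I. \<forall>j\<in>{1..S}. s j t \<noteq> 0"
    proof
      fix t assume t: "t \<in> I"
      show "\<forall>j\<in>{1..S}. s j t \<noteq> 0" using pw[OF t] bspec[OF h t] by (rule iffD1)
    qed
  next
    assume h: "\<forall>t\<in>I. \<forall>j\<in>{1..S}. s j t \<noteq> 0"
    show "\<forall>t\<in>I. jac_nonsingular S cC fvle fhl fhold (eps t) (P t) (\<lambda>j. n j t) (\<lambda>j. H j t)
                   (\<lambda>j. x j t) (alg_state cC V s y T x L t)"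
    proof
      fix t assume t: "t \<in> I"
      show "jac_nonsingular S cC fvle fhl fhold (eps t) (P t) (\<lambda>j. n j t) (\<lambda>j. H j t)
                   (\<lambda>j. x j t) (alg_state cC V s y T x L t)" using pw[OF t] bspec[OF h t] by (rule iffD2)
    qed
  qed
qed

end
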